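(* Let $G=(V,E)$ be a distance graph in $\mathbb{R}^d$ with $|V|=n$. Suppose there are $k\in\mathbb{N}$ and $\nu_0\in(0,1)$ such that every induced subgraph $G'=(V',E')$ of $G$ with $|V'|\ge[\nu_0 n]$ satisfies $\chi(G')>k$. Then for every family of Lebesgue measurable sets $S_1,\dots,S_k\subseteq\mathbb{R}^d$ such that $S=S_1\cup\dots\cup S_k$ has upper density $\nu\ge\nu_0$, and for every $a>0$, there exist an index $i\in\{1,\dots,k\}$ and points $\mathbf{x},\mathbf{y}\in S_i$ with $|\mathbf{x}-\mathbf{y}|=a$.
   Context: A distance graph in $\mathbb{R}^d$ is a finite graph $G=(V,E)$ with $V\subset\mathbb{R}^d$, $|V|<\infty$, and $E\subseteq\{\{\mathbf{x},\mathbf{y}\}\subseteq V:\ |\mathbf{x}-\mathbf{y}|=1\}$, where $|\cdot|$ is the Euclidean norm. $\chi$ denotes chromatic number, $[x]$ the integer part. The upper density of a measurable set $S\subseteq\mathbb{R}^d$ is $\limsup_{R\to\infty}\frac{\lambda(S\cap B_R)}{\lambda(B_R)}$, where $\lambda$ is Lebesgue measure and $B_R$ is the ball of radius $R$ centered at the origin. *)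

theory Defs
  imports "HOL-Analysis.Analysis" "HOL-Library.Liminf_Limsup"
begin

definition distance_graph :: "'a::euclidean_space set \<Rightarrow> 'a set set \<Rightarrow> bool" where
  "distance_graph V E \<longleftrightarrow> finite V \<and>
     E \<subseteq> {{x, y} | x y. x \<in> V \<and> y \<in> V \<and> dist x y = 1}"

definition proper_coloring :: "'a set \<Rightarrow> 'a set set \<Rightarrow> ('a \<Rightarrow> nat) \<Rightarrow> nat \<Rightarrow> bool" where
  "proper_coloring V E c k \<longleftrightarrow> c ` V \<subseteq> {..<k} \<and>
     (\<forall>x y. {x, y} \<in> E \<and> x \<noteq> y \<longrightarrow> c x \<noteq> c y)"

definition chromatic_number :: "'a set \<Rightarrow> 'a set set \<Rightarrow> nat" where
  "chromatic_number V E = (LEAST k. \<exists>c. proper_coloring V E c k)"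

definition induced_edges :: "'a set set \<Rightarrow> 'a set \<Rightarrow> 'a set set" where
  "induced_edges E V' = {e \<in> E. e \<subseteq> V'}"

definition upper_density :: "'a::euclidean_space set \<Rightarrow> ereal" where
  "upper_density S = Limsup at_top (\<lambda>R::real.
      ereal (measure lebesgue (S \<inter> ball 0 R) / measure lebesgue (ball (0::'a) R)))"

end

theory Submission
  imports Defs "HOL-Real_Asymp.Real_Asymp"
begin


lemma ball_meas:
  fixes c :: "'a::euclidean_space"
  assumes "r \<ge> 0"
  shows "measure lebesgue (ball c r) = r ^ DIM('a) * measure lebesgue (ball (0::'a) 1)"
  using content_ball_conv_unit_ball[OF assms, of c] by (simp add: measure_def)

lemma ball_unit_pos: "measure lebesgue (ball (0::'a::euclidean_space) 1) > 0"
  using content_ball_gt_0_iff[of "0::'a" 1] by (simp add: measure_def)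

lemma count_lemma:
  fixes A :: "'a::euclidean_space set" and T :: "'b \<Rightarrow> 'a set"
  assumes fin: "finite V" and A: "A \<in> lmeasurable" and T: "\<And>v. v \<in> V \<Longrightarrow> T v \<in> sets lebesgue"
    and bnd: "\<And>t. t \<in> A \<Longrightarrow> card {v\<in>V. t \<in> T v} \<le> M"
  shows "(\<Sum>v\<in>V. measure lebesgue (A \<inter> T v)) \<le> real M * measure lebesgue A"
proof -
  have fm: "A \<inter> T v \<in> lmeasurable" if "v \<in> V" for v
    using A T[OF that] by (meson fmeasurable_Int_fmeasurable inf_commute)
  have int: "integrable lebesgue (indicat_real (A \<inter> T v))" if "v \<in> V" for v
    using fm[OF that] by (simp add: lmeasurable_iff_integrable)
  have "(\<Sum>v\<in>V. measure lebesgue (A \<inter> T v)) = (\<Sum>v\<in>V. LINT x|lebesgue. indicat_real (A \<inter> T v) x)"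
    by simp
  also have "\<dots> = LINT x|lebesgue. (\<Sum>v\<in>V. indicat_real (A \<inter> T v) x)"
    using Bochner_Integration.integral_sum[where I=V and M=lebesgue and f="\<lambda>v. indicat_real (A \<inter> T v)"] int by simp
  also have "\<dots> \<le> LINT x|lebesgue. real M * indicat_real A x"
  proof (rule integral_mono)
    show "integrable lebesgue (\<lambda>x. \<Sum>v\<in>V. indicat_real (A \<inter> T v) x)"
      using int by auto
    show "integrable lebesgue (\<lambda>x. real M * indicat_real A x)"
      using A by (simp add: lmeasurable_iff_integrable)
    fix x
    show "(\<Sum>v\<in>V. indicat_real (A \<inter> T v) x) \<le> real M * indicat_real A x"
    proof (cases "x \<in> A")
      case True
      have "(\<Sum>v\<in>V. indicat_real (A \<inter> T v) x) = (\<Sum>v\<in>V. if x \<in> T v then 1 else 0)"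
        using True by (intro sum.cong) (auto simp: indicator_def)
      also have "\<dots> = real (card {v\<in>V. x \<in> T v})"
        using fin by (simp add: sum.If_cases Collect_conj_eq)
      also have "\<dots> \<le> real M" using bnd[OF True] by simp
      finally show ?thesis using True by simp
    qed (simp add: indicator_def)
  qed
  also have "\<dots> = real M * measure lebesgue A" by simp
  finally show ?thesis .
qed

lemma shift_meas:
  fixes c :: "'a::euclidean_space"
  shows "measure lebesgue (ball 0 R \<inter> {t. t + c \<in> S}) = measure lebesgue (ball c R \<inter> S)"
proof -
  have "(+) c ` (ball 0 R \<inter> {t. t + c \<in> S}) = ball c R \<inter> S"
  proof safe
    fix x assume "x \<in> ball c R" "x \<in> S"
    then show "x \<in> (+) c ` (ball 0 R \<inter> {t. t + c \<in> S})"
      by (intro image_eqI[where x="x - c"]) (auto simp: dist_norm norm_minus_commute)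
  qed (auto simp: dist_norm add.commute)
  then show ?thesis using measure_translation[of c "ball 0 R \<inter> {t. t + c \<in> S}"] by simp
qed

lemma shift_sets:
  fixes c :: "'a::euclidean_space"
  assumes "S \<in> sets lebesgue"
  shows "{t. t + c \<in> S} \<in> sets lebesgue"
proof -
  have "{t. t + c \<in> S} = (\<lambda>x. -c + x) ` S"
  proof safe
    fix t assume "t + c \<in> S"
    then show "t \<in> (\<lambda>x. -c + x) ` S" by (intro image_eqI[where x="t + c"]) auto
  qed auto
  then show ?thesis using lebesgue_sets_translation[OF assms, of "-c"] by simp
qed


lemma lower_meas:
  fixes c :: "'a::euclidean_space"
  assumes S: "S \<in> sets lebesgue" and "norm c \<le> r" and "0 \<le> r" and "r \<le> R"
  shows "measure lebesgue (S \<inter> ball 0 R) - (measure lebesgue (ball (0::'a) R) - measure lebesgue (ball (0::'a) (R - r)))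
     \<le> measure lebesgue (ball c R \<inter> S)"
proof -
  have sub: "S \<inter> ball 0 R \<subseteq> (ball c R \<inter> S) \<union> (ball 0 R - ball 0 (R - r))"
  proof
    fix x assume x: "x \<in> S \<inter> ball 0 R"
    show "x \<in> (ball c R \<inter> S) \<union> (ball 0 R - ball 0 (R - r))"
    proof (cases "norm x < R - r")
      case True
      have "dist c x \<le> norm x + norm c" using norm_triangle_ineq4[of c x] by (simp add: dist_norm)
      then have "dist c x < R" using True assms by linarith
      then show ?thesis using x by auto
    qed (use x in auto)
  qed
  have fm1: "ball c R \<inter> S \<in> fmeasurable lebesgue"
    using fmeasurable_Int_fmeasurable[OF lmeasurable_ball[of c R] S] .
  have fm2: "ball (0::'a) R - ball 0 (R - r) \<in> fmeasurable lebesgue"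
    by (simp add: fmeasurable.Diff)
  have "measure lebesgue (S \<inter> ball 0 R) \<le> measure lebesgue ((ball c R \<inter> S) \<union> (ball 0 R - ball 0 (R - r)))"
    by (rule measure_mono_fmeasurable[OF sub]) (use S fm1 fm2 in auto)
  also have "\<dots> \<le> measure lebesgue (ball c R \<inter> S) + measure lebesgue (ball (0::'a) R - ball 0 (R - r))"
    using Measure_Space.measure_Un_le[of "ball c R \<inter> S" lebesgue "ball 0 R - ball 0 (R - r)"] fm1 fm2 by auto
  also have "measure lebesgue (ball (0::'a) R - ball 0 (R - r)) = measure lebesgue (ball (0::'a) R) - measure lebesgue (ball (0::'a) (R - r))"
    by (rule measurable_measure_Diff) (use assms in auto)
  finally show ?thesis by simp
qed

lemma lim1: "((\<lambda>R::real. ((R - r) / R) ^ d) \<longlongrightarrow> 1) at_top"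
proof -
  have "((\<lambda>R::real. (R - r) / R) \<longlongrightarrow> 1) at_top" by real_asymp
  then show ?thesis using tendsto_power[of "\<lambda>R::real. (R - r) / R" 1 at_top d] by simp
qed


theorem theorem8:
  fixes V :: "'a::euclidean_space set" and E :: "'a set set"
    and n k :: nat and \<nu>0 :: real and Ss :: "nat \<Rightarrow> 'a set" and a :: real
  assumes "distance_graph V E"
    and "card V = n"
    and "0 < \<nu>0" and "\<nu>0 < 1"
    and "\<forall>V'. V' \<subseteq> V \<and> card V' \<ge> nat \<lfloor>\<nu>0 * real n\<rfloor>
           \<longrightarrow> chromatic_number V' (induced_edges E V') > k"
    and "\<forall>i\<in>{1..k}. Ss i \<in> sets lebesgue"
    and "upper_density (\<Union>i\<in>{1..k}. Ss i) \<ge> ereal \<nu>0"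
    and "a > 0"
  shows "\<exists>i\<in>{1..k}. \<exists>x\<in>Ss i. \<exists>y\<in>Ss i. dist x y = a"
proof (rule ccontr)
  assume H: "\<not> ?thesis"
  note dg = assms(1)[unfolded distance_graph_def]
  have finV: "finite V" using dg by blast
  define S where "S = (\<Union>i\<in>{1..k}. Ss i)"
  define m where "m = nat \<lfloor>\<nu>0 * real n\<rfloor>"
  have Smeas: "S \<in> sets lebesgue" unfolding S_def using assms(6) by auto
  have cnt: "card {v\<in>V. t + a *\<^sub>R v \<in> S} < m" for t
  proof (rule ccontr)
    define W where "W = {v\<in>V. t + a *\<^sub>R v \<in> S}"
    assume "\<not> card {v\<in>V. t + a *\<^sub>R v \<in> S} < m"
    then have "card W \<ge> m" unfolding W_def by simp
    moreover have WV: "W \<subseteq> V" unfolding W_def by auto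
    ultimately have gt: "chromatic_number W (induced_edges E W) > k"
      using assms(5) unfolding m_def by blast
    define ix where "ix v = (LEAST i. i \<in> {1..k} \<and> t + a *\<^sub>R v \<in> Ss i)" for v
    define col where "col v = ix v - 1" for v
    have ixp: "ix v \<in> {1..k} \<and> t + a *\<^sub>R v \<in> Ss (ix v)" if "v \<in> W" for v
    proof -
      from that obtain i where "i \<in> {1..k} \<and> t + a *\<^sub>R v \<in> Ss i"
        unfolding W_def S_def by auto
      then show ?thesis unfolding ix_def by (rule LeastI)
    qed
    have pc: "proper_coloring W (induced_edges E W) col k"
      unfolding proper_coloring_def
    proof (intro conjI allI impI)
      show "col ` W \<subseteq> {..<k}"
        using ixp unfolding col_def by fastforce
      fix x y assume xy: "{x, y} \<in> induced_edges E W \<and> x \<noteq> y"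
      then have xyW: "x \<in> W" "y \<in> W" and xyE: "{x, y} \<in> E"
        unfolding induced_edges_def by auto
      then obtain x' y' where "{x, y} = {x', y'}" "dist x' y' = 1"
        using dg by blast
      then have d1: "dist x y = 1"
        by (metis doubleton_eq_iff dist_commute)
      show "col x \<noteq> col y"
      proof
        assume "col x = col y"
        then have same: "ix x = ix y" using ixp[OF xyW(1)] ixp[OF xyW(2)] unfolding col_def by auto
        have "dist (t + a *\<^sub>R x) (t + a *\<^sub>R y) = a"
          using d1 \<open>a > 0\<close> by (simp add: dist_norm scaleR_diff_right[symmetric])
        then show False using H ixp[OF xyW(1)] ixp[OF xyW(2)] same by metis
      qed
    qed
    have "chromatic_number W (induced_edges E W) \<le> k"
      unfolding chromatic_number_def using pc by (intro Least_le) blast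
    with gt show False by simp
  qed
  have m1: "m \<ge> 1" using cnt[of 0] by simp
  have mle: "real m \<le> \<nu>0 * real n"
  proof -
    have "\<nu>0 * real n \<ge> 0" using assms(3) by simp
    then show ?thesis unfolding m_def by linarith
  qed
  have npos: "n > 0"
  proof (rule ccontr)
    assume "\<not> n > 0" then have "n = 0" by simp
    then show False using mle m1 by simp
  qed
  define r where "r = (\<Sum>v\<in>V. norm (a *\<^sub>R v))"
  have r0: "r \<ge> 0" unfolding r_def by (simp add: sum_nonneg)
  have rv: "norm (a *\<^sub>R v) \<le> r" if "v \<in> V" for v
    unfolding r_def using finV that by (intro member_le_sum) auto
  define \<beta> where "\<beta> R = measure lebesgue (ball (0::'a) R)" for R
  define \<beta>1 where "\<beta>1 = \<beta> 1"
  have b1: "\<beta>1 > 0" unfolding \<beta>1_def \<beta>_def by (rule ball_unit_pos)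
  have bR: "\<beta> R = R ^ DIM('a) * \<beta>1" if "R \<ge> 0" for R
    unfolding \<beta>_def \<beta>1_def using ball_meas[OF that] by simp
  define g where "g R = (real m - 1) / real n + 1 - ((R - r) / R) ^ DIM('a)" for R
  have bound: "measure lebesgue (S \<inter> ball 0 R) / \<beta> R \<le> g R" if R: "R > r" for R
  proof -
    have Rpos: "R > 0" using R r0 by simp
    have "(\<Sum>v\<in>V. measure lebesgue (ball 0 R \<inter> {t. t + a *\<^sub>R v \<in> S})) \<le> real (m - 1) * measure lebesgue (ball (0::'a) R)"
    proof (rule count_lemma[OF finV])
      show "ball (0::'a) R \<in> lmeasurable" by simp
      show "{t. t + a *\<^sub>R v \<in> S} \<in> sets lebesgue" for v by (rule shift_sets[OF Smeas])
      show "card {v \<in> V. t \<in> {t. t + a *\<^sub>R v \<in> S}} \<le> m - 1" for t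
        using cnt[of t] by simp
    qed
    moreover have "(\<Sum>v\<in>V. measure lebesgue (ball 0 R \<inter> {t. t + a *\<^sub>R v \<in> S}))
        \<ge> (\<Sum>v\<in>V. measure lebesgue (S \<inter> ball 0 R) - (\<beta> R - \<beta> (R - r)))"
    proof (rule sum_mono)
      fix v assume "v \<in> V"
      then show "measure lebesgue (S \<inter> ball 0 R) - (\<beta> R - \<beta> (R - r)) \<le> measure lebesgue (ball 0 R \<inter> {t. t + a *\<^sub>R v \<in> S})"
        unfolding shift_meas \<beta>_def using lower_meas[OF Smeas rv[of v] r0] R by simp
    qed
    ultimately have ineq: "real n * (measure lebesgue (S \<inter> ball 0 R) - (\<beta> R - \<beta> (R - r))) \<le> (real m - 1) * \<beta> R"
      using assms(2) m1 by (simp add: \<beta>_def of_nat_diff)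
    have bRpos: "\<beta> R > 0" using bR[of R] Rpos b1 by simp
    have "measure lebesgue (S \<inter> ball 0 R) \<le> (real m - 1) / real n * \<beta> R + \<beta> R - \<beta> (R - r)"
      using ineq npos by (simp add: field_simps)
    then have "measure lebesgue (S \<inter> ball 0 R) / \<beta> R \<le> ((real m - 1) / real n * \<beta> R + \<beta> R - \<beta> (R - r)) / \<beta> R"
      using bRpos by (simp add: divide_right_mono)
    also have "\<dots> = (real m - 1) / real n + 1 - \<beta> (R - r) / \<beta> R"
      using bRpos by (simp add: field_simps)
    also have "\<beta> (R - r) / \<beta> R = ((R - r) / R) ^ DIM('a)"
      using bR[of R] bR[of "R - r"] R Rpos b1 by (simp add: power_divide)
    finally show ?thesis unfolding g_def .
  qed
  have glim: "(g \<longlongrightarrow> (real m - 1) / real n) at_top"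
  proof -
    have "((\<lambda>R. (real m - 1) / real n + 1 - ((R - r) / R) ^ DIM('a)) \<longlongrightarrow> (real m - 1) / real n + 1 - 1) at_top"
      by (intro tendsto_intros lim1)
    then show ?thesis unfolding g_def by simp
  qed
  have "ereal \<nu>0 \<le> upper_density S" using assms(7) unfolding S_def by simp
  also have "upper_density S \<le> Limsup at_top (\<lambda>R. ereal (g R))"
    unfolding upper_density_def
  proof (rule Limsup_mono)
    show "\<forall>\<^sub>F R in at_top. ereal (measure lebesgue (S \<inter> ball 0 R) / measure lebesgue (ball (0::'a) R)) \<le> ereal (g R)"
      using eventually_gt_at_top[of r] by eventually_elim (use bound in \<open>simp add: \<beta>_def\<close>)
  qed
  also have "Limsup at_top (\<lambda>R. ereal (g R)) = ereal ((real m - 1) / real n)"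
    by (rule lim_imp_Limsup) (auto intro: tendsto_ereal glim)
  finally have "\<nu>0 \<le> (real m - 1) / real n" by simp
  then have "\<nu>0 * real n \<le> real m - 1" using npos by (simp add: field_simps)
  then show False using mle by linarith
qed

end
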